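(* Let $\Gamma=(G,\sigma)$ be a signed graph with vertex set $V_G$, and let $\pi=\{C_1,\ldots,C_t,D\}$ be a partition of $V_G$ with $|C_i|=n_i$ ($i=1,\ldots,t$) and $|D|=d$. Assume: (1) for each $1\le i,j\le t$, any two vertices in $C_i$ have the same $j$-th net-degree, i.e. $d^{\pm}_j(u)=d^{\pm}_j(w)$ for all $u,w\in C_i$; (2) for each $i=1,\ldots,t$ and each $v\in D$, exactly one of the following holds: (a) $d^{\pm}_i(v)=0$; (b) $d^+_i(v)=n_i/2$ and $d^-_i(v)=0$; (c) $d^-_i(v)=n_i/2$ and $d^+_i(v)=0$; (d) $d^+_i(v)=n_i$; (e) $d^-_i(v)=n_i$. Define the signed graph $\Gamma^\pi$ on the same vertex set as follows: all edges not joining a vertex of $D$ to a vertex of $\bigcup_i C_i$ are kept with their signs; for every $v\in D$ and every $1\le i\le t$: in case (a), every edge between $v$ and $C_i$ is kept but its sign is reversed; in case (b), the $n_i/2$ (positive) edges from $v$ to $C_i$ are deleted and $v$ is joined by positive edges to the other $n_i/2$ vertices of $C_i$; in case (c), the $n_i/2$ (negative) edges from $v$ to $C_i$ are deleted and $v$ is joined by negative edges to the other $n_i/2$ vertices of $C_i$; in cases (d) and (e), the edges from $v$ to $C_i$ are left unchanged. Then $\Gamma$ and $\Gamma^\pi$ are cospectral, i.e. their adjacency matrices have the same characteristic polynomial.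
   Context: A signed graph $\Gamma=(G,\sigma)$ is a simple finite graph $G=(V_G,E_G)$ with a map $\sigma:E_G\to\{+1,-1\}$. Its adjacency matrix $A_\Gamma=(a_{uv})$ is the symmetric matrix with $a_{uv}=\sigma(uv)$ if $u,v$ are adjacent and $a_{uv}=0$ otherwise; two signed graphs are cospectral if $\det(xI-A)$ coincide. For a vertex $v$ and a vertex subset $C_i$, $d^+_i(v)$ (resp. $d^-_i(v)$) is the number of positive (resp. negative) edges joining $v$ to vertices of $C_i$, and the $i$-th net-degree is $d^{\pm}_i(v)=d^+_i(v)-d^-_i(v)$. *)

theory Defs
  imports "Jordan_Normal_Form.Char_Poly"
begin

text \<open>A signed graph on the vertex set {0..<n} is represented by its adjacency
matrix: a symmetric n x n integer matrix with zero diagonal and entries in {-1,0,1}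
(entry sigma(uv) if u,v adjacent, 0 otherwise).\<close>
definition signed_adj :: "nat \<Rightarrow> int mat \<Rightarrow> bool" where
  "signed_adj n A \<longleftrightarrow> A \<in> carrier_mat n n \<and>
     (\<forall>u<n. \<forall>v<n. A $$ (u,v) = A $$ (v,u)) \<and>
     (\<forall>u<n. A $$ (u,u) = 0) \<and>
     (\<forall>u<n. \<forall>v<n. A $$ (u,v) \<in> {-1,0,1})"

definition dplus :: "int mat \<Rightarrow> nat set \<Rightarrow> nat \<Rightarrow> nat" where
  "dplus A S v = card {u\<in>S. A $$ (v,u) = 1}"

definition dminus :: "int mat \<Rightarrow> nat set \<Rightarrow> nat \<Rightarrow> nat" where
  "dminus A S v = card {u\<in>S. A $$ (v,u) = -1}"

definition dnet :: "int mat \<Rightarrow> nat set \<Rightarrow> nat \<Rightarrow> int" where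
  "dnet A S v = int (dplus A S v) - int (dminus A S v)"

text \<open>The five cases (a)-(e) of condition (2), for a vertex v and a cell S.
Halves are written multiplicatively: d = |S|/2 iff 2*d = |S|.\<close>
definition caseA :: "int mat \<Rightarrow> nat set \<Rightarrow> nat \<Rightarrow> bool" where
  "caseA A S v \<longleftrightarrow> dnet A S v = 0"
definition caseB :: "int mat \<Rightarrow> nat set \<Rightarrow> nat \<Rightarrow> bool" where
  "caseB A S v \<longleftrightarrow> 2 * dplus A S v = card S \<and> dminus A S v = 0"
definition caseC :: "int mat \<Rightarrow> nat set \<Rightarrow> nat \<Rightarrow> bool" where
  "caseC A S v \<longleftrightarrow> 2 * dminus A S v = card S \<and> dplus A S v = 0"
definition caseD :: "int mat \<Rightarrow> nat set \<Rightarrow> nat \<Rightarrow> bool" where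
  "caseD A S v \<longleftrightarrow> dplus A S v = card S"
definition caseE :: "int mat \<Rightarrow> nat set \<Rightarrow> nat \<Rightarrow> bool" where
  "caseE A S v \<longleftrightarrow> dminus A S v = card S"

text \<open>New value of the entry between v in D and u in the cell S in Gamma^pi.\<close>
definition new_entry :: "int mat \<Rightarrow> nat set \<Rightarrow> nat \<Rightarrow> nat \<Rightarrow> int" where
  "new_entry A S v u =
     (if caseA A S v then - A $$ (v,u)
      else if caseB A S v then (if A $$ (v,u) = 1 then 0 else 1)
      else if caseC A S v then (if A $$ (v,u) = -1 then 0 else -1)
      else A $$ (v,u))"

text \<open>Adjacency matrix of Gamma^pi for the partition {C 0, ..., C (t-1), D}.\<close>
definition gpi :: "nat \<Rightarrow> int mat \<Rightarrow> nat \<Rightarrow> (nat \<Rightarrow> nat set) \<Rightarrow> nat set \<Rightarrow> int mat" where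
  "gpi n A t C D = mat n n (\<lambda>(x,y).
     if x \<in> D \<and> (\<exists>i<t. y \<in> C i) then new_entry A (C (THE i. i < t \<and> y \<in> C i)) x y
     else if y \<in> D \<and> (\<exists>i<t. x \<in> C i) then new_entry A (C (THE i. i < t \<and> x \<in> C i)) y x
     else A $$ (x,y))"

end

theory Submission imports Defs begin

locale thm_setup =
  fixes n t :: nat and A :: "int mat" and C :: "nat \<Rightarrow> nat set" and D :: "nat set"
  assumes adj: "signed_adj n A"
    and ne: "\<forall>i<t. C i \<noteq> {}"
    and cover: "(\<Union>i<t. C i) \<union> D = {0..<n}"
    and disj: "\<forall>i<t. \<forall>j<t. i \<noteq> j \<longrightarrow> C i \<inter> C j = {}"
    and CD: "\<forall>i<t. C i \<inter> D = {}"
    and eqdeg: "\<forall>i<t. \<forall>j<t. \<forall>u\<in>C i. \<forall>w\<in>C i. dnet A (C j) u = dnet A (C j) w"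
    and cases: "\<forall>i<t. \<forall>v\<in>D. length (filter id [caseA A (C i) v, caseB A (C i) v,
            caseC A (C i) v, caseD A (C i) v, caseE A (C i) v]) = 1"
begin

definition cell :: "nat \<Rightarrow> nat" where "cell x = (THE i. i < t \<and> x \<in> C i)"
definition NN :: "nat \<Rightarrow> rat" where "NN i = of_nat (card (C i))"
definition RR :: "nat \<Rightarrow> nat \<Rightarrow> rat" where "RR i v = (\<Sum>u\<in>C i. of_int (A $$ (v,u)))"
definition dl :: "nat \<Rightarrow> nat \<Rightarrow> rat" where "dl x y = (if x = y then 1 else 0)"
definition Qm :: "rat mat" where
  "Qm = mat n n (\<lambda>(x,y). if x \<in> D then dl x y else if y \<in> C (cell x) then 2 / NN (cell x) - dl x y else 0)"

lemma Ci_sub: "i < t \<Longrightarrow> C i \<subseteq> {0..<n}" using cover by auto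
lemma D_sub: "D \<subseteq> {0..<n}" using cover by auto
lemma fin_C: "i < t \<Longrightarrow> finite (C i)" using Ci_sub finite_subset by blast
lemma cell_eq: "i < t \<Longrightarrow> x \<in> C i \<Longrightarrow> cell x = i"
  unfolding cell_def by (rule the_equality) (use disj in auto)
lemma notD: "i < t \<Longrightarrow> x \<in> C i \<Longrightarrow> x \<notin> D" using CD by auto
lemma cover_pt: "x < n \<Longrightarrow> x \<notin> D \<Longrightarrow> cell x < t \<and> x \<in> C (cell x)"
proof -
  assume "x < n" "x \<notin> D"
  then have "x \<in> (\<Union>i<t. C i)" using cover by auto
  then obtain i where "i < t" "x \<in> C i" by auto
  then show ?thesis using cell_eq by auto
qed
lemma NN_pos: "i < t \<Longrightarrow> NN i > 0"
  using ne fin_C unfolding NN_def by (simp add: card_gt_0_iff)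

lemma A_car: "A \<in> carrier_mat n n" using adj unfolding signed_adj_def by auto
lemma A_sym: "u < n \<Longrightarrow> v < n \<Longrightarrow> A $$ (u,v) = A $$ (v,u)" using adj unfolding signed_adj_def by auto
lemma A_vals: "u < n \<Longrightarrow> v < n \<Longrightarrow> A $$ (u,v) \<in> {-1,0,1}" using adj unfolding signed_adj_def by auto

lemma Qrow: "x < n \<Longrightarrow> y < n \<Longrightarrow> Qm $$ (x,y) =
   (if x \<in> D then dl x y else if y \<in> C (cell x) then 2 / NN (cell x) - dl x y else 0)"
  by (simp add: Qm_def)

lemma Qcol: assumes "a < n" "y < n" shows "Qm $$ (a,y) =
   (if y \<in> D then dl a y else if a \<in> C (cell y) then 2 / NN (cell y) - dl a y else 0)"
proof (cases "a \<in> D")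
  case True
  then show ?thesis using assms cover_pt[of y] notD[of "cell y" a] by (auto simp: Qrow dl_def)
next
  case False
  note a = cover_pt[OF assms(1) False]
  show ?thesis
  proof (cases "y \<in> D")
    case True
    then show ?thesis using assms a notD[of "cell a" y] by (auto simp: Qrow dl_def)
  next
    case yD: False
    note y = cover_pt[OF assms(2) yD]
    show ?thesis
    proof (cases "cell a = cell y")
      case True
      then show ?thesis using assms a y False yD by (auto simp: Qrow)
    next
      case ne: False
      have "y \<notin> C (cell a)" using cell_eq[of "cell a" y] a ne by auto
      moreover have "a \<notin> C (cell y)" using cell_eq[of "cell y" a] y ne by auto
      ultimately show ?thesis using assms False yD by (auto simp: Qrow)
    qed
  qed
qed

lemma sum_row: assumes "S \<subseteq> {0..<n}" "x \<in> S" "finite S"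
  shows "(\<Sum>a\<in>{0..<n}. (if a \<in> S then c - dl x a else 0) * f a) = c * (\<Sum>a\<in>S. f a) - f x"
proof -
  have "(\<Sum>a\<in>{0..<n}. (if a \<in> S then c - dl x a else 0) * f a)
      = (\<Sum>a\<in>{0..<n}. if a \<in> S then (c - dl x a) * f a else 0)"
    by (rule sum.cong) auto
  also have "\<dots> = (\<Sum>a\<in>S. (c - dl x a) * f a)"
    using assms by (simp add: sum.inter_restrict[symmetric] Int_absorb1)
  also have "\<dots> = c * (\<Sum>a\<in>S. f a) - (\<Sum>a\<in>S. dl x a * f a)"
    by (simp add: algebra_simps sum_subtractf sum_distrib_left)
  also have "(\<Sum>a\<in>S. dl x a * f a) = f x"
    using assms by (simp add: dl_def if_distrib[of "\<lambda>z. z * _"] cong: if_cong)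
  finally show ?thesis .
qed

lemma sum_row': assumes "S \<subseteq> {0..<n}" "x \<in> S" "finite S"
  shows "(\<Sum>a\<in>{0..<n}. f a * (if a \<in> S then c - dl a x else 0)) = c * (\<Sum>a\<in>S. f a) - f x"
proof -
  have "(\<Sum>a\<in>{0..<n}. f a * (if a \<in> S then c - dl a x else 0))
     = (\<Sum>a\<in>{0..<n}. (if a \<in> S then c - dl x a else 0) * f a)"
    by (rule sum.cong) (auto simp: dl_def)
  then show ?thesis using sum_row[OF assms] by simp
qed

lemma sum_dl: "x < n \<Longrightarrow> (\<Sum>a\<in>{0..<n}. dl x a * f a) = f x"
  by (simp add: dl_def if_distrib[of "\<lambda>z. z * _"] cong: if_cong)
lemma sum_dl': "x < n \<Longrightarrow> (\<Sum>a\<in>{0..<n}. f a * dl a x) = f x"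
  by (simp add: dl_def if_distrib cong: if_cong)

lemma Q_car: "Qm \<in> carrier_mat n n" by (simp add: Qm_def)

lemma QM: assumes M: "M \<in> carrier_mat n n" and xy: "x < n" "y < n"
  shows "(Qm * M) $$ (x,y) = (if x \<in> D then M $$ (x,y)
     else 2 / NN (cell x) * (\<Sum>a\<in>C (cell x). M $$ (a,y)) - M $$ (x,y))"
proof -
  have "(Qm * M) $$ (x,y) = (\<Sum>a\<in>{0..<n}. Qm $$ (x,a) * M $$ (a,y))"
    using M xy by (simp add: Qm_def scalar_prod_def)
  also have "\<dots> = (\<Sum>a\<in>{0..<n}. (if x \<in> D then dl x a else if a \<in> C (cell x) then 2 / NN (cell x) - dl x a else 0) * M $$ (a,y))"
    by (rule sum.cong) (use xy in \<open>auto simp: Qrow\<close>)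
  also have "\<dots> = (if x \<in> D then M $$ (x,y)
     else 2 / NN (cell x) * (\<Sum>a\<in>C (cell x). M $$ (a,y)) - M $$ (x,y))"
  proof (cases "x \<in> D")
    case True then show ?thesis using sum_dl[OF xy(1)] by simp
  next
    case False
    note c = cover_pt[OF xy(1) False]
    show ?thesis using False sum_row[OF Ci_sub[OF conjunct1[OF c]] conjunct2[OF c] fin_C[OF conjunct1[OF c]]] by simp
  qed
  finally show ?thesis .
qed

lemma MQ: assumes M: "M \<in> carrier_mat n n" and xy: "x < n" "y < n"
  shows "(M * Qm) $$ (x,y) = (if y \<in> D then M $$ (x,y)
     else 2 / NN (cell y) * (\<Sum>b\<in>C (cell y). M $$ (x,b)) - M $$ (x,y))"
proof -
  have "(M * Qm) $$ (x,y) = (\<Sum>a\<in>{0..<n}. M $$ (x,a) * Qm $$ (a,y))"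
    using M xy by (simp add: Qm_def scalar_prod_def)
  also have "\<dots> = (\<Sum>a\<in>{0..<n}. M $$ (x,a) * (if y \<in> D then dl a y else if a \<in> C (cell y) then 2 / NN (cell y) - dl a y else 0))"
    by (rule sum.cong) (use xy in \<open>auto simp: Qcol\<close>)
  also have "\<dots> = (if y \<in> D then M $$ (x,y)
     else 2 / NN (cell y) * (\<Sum>b\<in>C (cell y). M $$ (x,b)) - M $$ (x,y))"
  proof (cases "y \<in> D")
    case True then show ?thesis using sum_dl'[OF xy(2)] by simp
  next
    case False
    note c = cover_pt[OF xy(2) False]
    show ?thesis using False sum_row'[OF Ci_sub[OF conjunct1[OF c]] conjunct2[OF c] fin_C[OF conjunct1[OF c]]] by simp
  qed
  finally show ?thesis .
qed

lemma QQ: "Qm * Qm = 1\<^sub>m n"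
proof (rule eq_matI)
  fix x y assume "x < dim_row (1\<^sub>m n :: rat mat)" "y < dim_col (1\<^sub>m n :: rat mat)"
  then have xy: "x < n" "y < n" by auto
  show "(Qm * Qm) $$ (x,y) = 1\<^sub>m n $$ (x,y)"
  proof (cases "x \<in> D")
    case True then show ?thesis using xy by (simp add: QM[OF Q_car xy] Qrow dl_def)
  next
    case xD: False
    note cx = cover_pt[OF xy(1) xD]
    define i where "i = cell x"
    have i: "i < t" "x \<in> C i" using cx i_def by auto
    have eq: "(Qm * Qm) $$ (x,y) = 2 / NN i * (\<Sum>a\<in>C i. Qm $$ (a,y)) - Qm $$ (x,y)"
      using QM[OF Q_car xy] xD i_def by simp
    show ?thesis
    proof (cases "y \<in> C i")
      case True
      have yD: "y \<notin> D" using notD i True by auto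
      have cy: "cell y = i" using cell_eq i True by auto
      have "(\<Sum>a\<in>C i. Qm $$ (a,y)) = (\<Sum>a\<in>C i. 2 / NN i - dl a y)"
        by (rule sum.cong) (use Ci_sub[OF i(1)] xy yD cy in \<open>auto simp: Qcol\<close>)
      also have "\<dots> = 1"
        using True fin_C[OF i(1)] NN_pos[OF i(1)] ne i(1) by (simp add: sum_subtractf NN_def dl_def)
      finally show ?thesis using eq xy xD True i_def by (simp add: Qrow dl_def)
    next
      case False
      have "(\<Sum>a\<in>C i. Qm $$ (a,y)) = 0"
      proof (rule sum.neutral, intro ballI)
        fix a assume a: "a \<in> C i"
        have an: "a < n" using a Ci_sub[OF i(1)] by auto
        show "Qm $$ (a,y) = 0"
        proof (cases "y \<in> D")
          case True then show ?thesis using an xy a False by (auto simp: Qcol dl_def)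
        next
          case yD: False
          note cy = cover_pt[OF xy(2) yD]
          have "a \<notin> C (cell y)" using False cy disj i(1) a by blast
          then show ?thesis using an xy a False yD by (auto simp: Qcol dl_def)
        qed
      qed
      moreover have "x \<noteq> y" using False i by auto
      ultimately show ?thesis using eq xy xD False i_def by (simp add: Qrow dl_def)
    qed
  qed
qed (auto simp: Qm_def)

lemma Rdnet: assumes v: "v < n" and S: "S \<subseteq> {0..<n}"
  shows "(\<Sum>u\<in>S. rat_of_int (A $$ (v,u))) = of_int (dnet A S v)"
proof -
  have fin: "finite S" using S finite_subset by blast
  have "(\<Sum>u\<in>S. A $$ (v,u)) = (\<Sum>u\<in>S. (if A $$ (v,u) = 1 then 1 else 0) - (if A $$ (v,u) = -1 then 1 else 0))"
  proof (rule sum.cong)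
    fix u assume "u \<in> S"
    then have "u < n" using S by auto
    then have "A $$ (v,u) \<in> {-1,0,1}" using A_vals v by blast
    then show "A $$ (v,u) = (if A $$ (v,u) = 1 then 1 else 0) - (if A $$ (v,u) = -1 then 1 else 0)" by auto
  qed simp
  also have "\<dots> = (\<Sum>u\<in>S. (if A $$ (v,u) = 1 then 1 else 0)) - (\<Sum>u\<in>S. (if A $$ (v,u) = -1 then 1 else 0))"
    by (simp add: sum_subtractf)
  also have "(\<Sum>u\<in>S. (if A $$ (v,u) = 1 then 1 else 0)) = int (dplus A S v)"
    unfolding dplus_def using fin by (simp add: sum.inter_filter[symmetric])
  also have "(\<Sum>u\<in>S. (if A $$ (v,u) = -1 then 1 else 0)) = int (dminus A S v)"
    unfolding dminus_def using fin by (simp add: sum.inter_filter[symmetric])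
  finally have "(\<Sum>u\<in>S. A $$ (v,u)) = dnet A S v" unfolding dnet_def .
  then show ?thesis by (metis of_int_sum)
qed

lemma RR_dnet: "j < t \<Longrightarrow> v < n \<Longrightarrow> RR j v = of_int (dnet A (C j) v)"
  unfolding RR_def using Rdnet Ci_sub by blast

lemma len1: "length (filter id [a,b,c,d,e]) = 1 \<Longrightarrow> a \<or> b \<or> c \<or> d \<or> e"
  by (cases a; cases b; cases c; cases d; cases e; simp)

lemma NE: assumes j: "j < t" and v: "v \<in> D" and u: "u \<in> C j"
  shows "rat_of_int (new_entry A (C j) v u) = 2 / NN j * RR j v - of_int (A $$ (v,u))"
proof -
  define S where "S = C j"
  have Sn: "S \<subseteq> {0..<n}" and fin: "finite S" and Sne: "S \<noteq> {}" using Ci_sub fin_C ne j S_def by auto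
  have vn: "v < n" using v D_sub by auto
  have un: "u < n" using u Ci_sub[OF j] by auto
  have uS: "u \<in> S" using u S_def by simp
  define p where "p = dplus A S v"
  define m where "m = dminus A S v"
  have R: "RR j v = of_nat p - of_nat m" using RR_dnet[OF j vn] by (simp add: dnet_def p_def m_def S_def)
  have Npos: "card S > 0" using fin Sne by (simp add: card_gt_0_iff)
  have NNj: "NN j = of_nat (card S)" by (simp add: NN_def S_def)
  have vals: "A $$ (v,u) \<in> {-1,0,1}" using A_vals vn un by auto
  have one: "caseA A S v \<or> caseB A S v \<or> caseC A S v \<or> caseD A S v \<or> caseE A S v"
    using cases j v len1 unfolding S_def by blast
  have m0: "m = 0 \<Longrightarrow> A $$ (v,u) \<noteq> -1"
  proof
    assume "m = 0" "A $$ (v,u) = -1"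
    then have "u \<in> {u\<in>S. A $$ (v,u) = -1}" using uS by auto
    moreover have "finite {u\<in>S. A $$ (v,u) = -1}" using fin by auto
    ultimately show False using \<open>m = 0\<close> unfolding m_def dminus_def by auto
  qed
  have p0: "p = 0 \<Longrightarrow> A $$ (v,u) \<noteq> 1"
  proof
    assume "p = 0" "A $$ (v,u) = 1"
    then have "u \<in> {u\<in>S. A $$ (v,u) = 1}" using uS by auto
    moreover have "finite {u\<in>S. A $$ (v,u) = 1}" using fin by auto
    ultimately show False using \<open>p = 0\<close> unfolding p_def dplus_def by auto
  qed
  show ?thesis
  proof (cases "caseA A S v")
    case True
    then have "p = m" unfolding caseA_def dnet_def p_def m_def by simp
    then show ?thesis using True R by (simp add: new_entry_def S_def[symmetric])
  next
    case nA: False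
    show ?thesis
    proof (cases "caseB A S v")
      case True
      then have pm: "2 * p = card S" "m = 0" unfolding caseB_def p_def m_def by auto
      have "2 / NN j * RR j v = 1" using pm R NNj Npos by (simp add: field_simps)
      then show ?thesis using nA True m0[OF pm(2)] vals by (auto simp: new_entry_def S_def[symmetric])
    next
      case nB: False
      show ?thesis
      proof (cases "caseC A S v")
        case True
        then have pm: "2 * m = card S" "p = 0" unfolding caseC_def p_def m_def by auto
        have "2 / NN j * RR j v = -1" using pm R NNj Npos by (simp add: field_simps)
        then show ?thesis using nA nB True p0[OF pm(2)] vals by (auto simp: new_entry_def S_def[symmetric])
      next
        case nC: False
        have ne': "new_entry A (C j) v u = A $$ (v,u)" using nA nB nC by (simp add: new_entry_def S_def[symmetric])
        have DE: "caseD A S v \<or> caseE A S v" using one nA nB nC by blast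
        then show ?thesis
        proof
          assume cD: "caseD A S v"
          have "{u\<in>S. A $$ (v,u) = 1} = S"
            using cD fin unfolding caseD_def dplus_def by (intro card_subset_eq) auto
          then have all1: "\<forall>w\<in>S. A $$ (v,w) = 1" by blast
          have "{u\<in>S. A $$ (v,u) = -1} = {}" using all1 by auto
          then have "m = 0" unfolding m_def dminus_def by (metis card.empty)
          moreover have "p = card S" using cD unfolding caseD_def p_def by simp
          ultimately have "2 / NN j * RR j v = 2" using R NNj Npos by simp
          then show ?thesis using ne' all1 uS by simp
        next
          assume cE: "caseE A S v"
          have "{u\<in>S. A $$ (v,u) = -1} = S"
            using cE fin unfolding caseE_def dminus_def by (intro card_subset_eq) auto
          then have all1: "\<forall>w\<in>S. A $$ (v,w) = -1" by blast
          have "{u\<in>S. A $$ (v,u) = 1} = {}" using all1 by auto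
          then have "p = 0" unfolding p_def dplus_def by (metis card.empty)
          moreover have "m = card S" using cE unfolding caseE_def m_def by simp
          ultimately have "2 / NN j * RR j v = -2" using R NNj Npos by simp
          then show ?thesis using ne' all1 uS by simp
        qed
      qed
    qed
  qed
qed

definition Ar :: "rat mat" where "Ar = map_mat rat_of_int A"
definition Gr :: "rat mat" where "Gr = map_mat rat_of_int (gpi n A t C D)"

lemma Ar_car: "Ar \<in> carrier_mat n n" using A_car by (simp add: Ar_def)
lemma Ar_idx: "a < n \<Longrightarrow> b < n \<Longrightarrow> Ar $$ (a,b) = of_int (A $$ (a,b))"
  using A_car by (simp add: Ar_def)

lemma cell_def': "(THE i. i < t \<and> y \<in> C i) = cell y" by (simp add: cell_def)

lemma gpi_idx: "x < n \<Longrightarrow> y < n \<Longrightarrow> gpi n A t C D $$ (x,y) =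
     (if x \<in> D \<and> (\<exists>i<t. y \<in> C i) then new_entry A (C (cell y)) x y
     else if y \<in> D \<and> (\<exists>i<t. x \<in> C i) then new_entry A (C (cell x)) y x
     else A $$ (x,y))"
  unfolding gpi_def cell_def by simp

lemma RR_sym: assumes "i < t" "y < n" shows "(\<Sum>a\<in>C i. rat_of_int (A $$ (a,y))) = RR i y"
  unfolding RR_def
proof (intro sum.cong refl)
  fix a assume "a \<in> C i"
  then have "a < n" using Ci_sub[OF assms(1)] by auto
  then show "rat_of_int (A $$ (a,y)) = rat_of_int (A $$ (y,a))" using A_sym assms(2) by simp
qed

lemma main_eq: "Gr = Qm * (Ar * Qm)"
proof (rule eq_matI)
  fix x y assume "x < dim_row (Qm * (Ar * Qm))" "y < dim_col (Qm * (Ar * Qm))"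
  then have xy: "x < n" "y < n" by (auto simp: Qm_def)
  have P: "Ar * Qm \<in> carrier_mat n n" using Ar_car Q_car by auto
  have Pidx: "(Ar * Qm) $$ (a,y) = (if y \<in> D then of_int (A $$ (a,y))
     else 2 / NN (cell y) * RR (cell y) a - of_int (A $$ (a,y)))" if "a < n" for a
  proof -
    have "(\<Sum>b\<in>C (cell y). Ar $$ (a,b)) = RR (cell y) a" if "y \<notin> D"
      unfolding RR_def
    proof (intro sum.cong refl)
      fix b assume "b \<in> C (cell y)"
      then have "b < n" using Ci_sub[OF conjunct1[OF cover_pt[OF xy(2) that]]] by auto
      then show "Ar $$ (a,b) = rat_of_int (A $$ (a,b))" using Ar_idx \<open>a < n\<close> by simp
    qed
    then show ?thesis using MQ[OF Ar_car \<open>a < n\<close> xy(2)] \<open>a < n\<close> xy by (simp add: Ar_idx)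
  qed
  have lhs: "Gr $$ (x,y) = of_int (gpi n A t C D $$ (x,y))" using xy by (simp add: Gr_def gpi_def)
  show "Gr $$ (x,y) = (Qm * (Ar * Qm)) $$ (x,y)"
  proof (cases "x \<in> D")
    case xD: True
    show ?thesis
    proof (cases "y \<in> D")
      case True
      have b1: "(x \<in> D \<and> (\<exists>i<t. y \<in> C i)) = False" "(y \<in> D \<and> (\<exists>i<t. x \<in> C i)) = False"
        using xD True CD by auto
      have g: "gpi n A t C D $$ (x,y) = A $$ (x,y)" unfolding gpi_idx[OF xy] by (simp only: b1 if_False)
      show ?thesis using lhs xD True xy g by (simp add: QM[OF P xy] Pidx)
    next
      case False
      note cy = cover_pt[OF xy(2) False]
      have b1: "(x \<in> D \<and> (\<exists>i<t. y \<in> C i)) = True" using cy xD by blast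
      have g: "gpi n A t C D $$ (x,y) = new_entry A (C (cell y)) x y" unfolding gpi_idx[OF xy] by (simp only: b1 if_True)
      show ?thesis using lhs xD False xy NE[OF conjunct1[OF cy] xD conjunct2[OF cy]] g
        by (simp add: QM[OF P xy] Pidx)
    qed
  next
    case xD: False
    note cx = cover_pt[OF xy(1) xD]
    define i where "i = cell x"
    have i: "i < t" "x \<in> C i" using cx i_def by auto
    have Ci: "\<And>a. a \<in> C i \<Longrightarrow> a < n" using Ci_sub[OF i(1)] by auto
    show ?thesis
    proof (cases "y \<in> D")
      case yD: True
      have "(\<Sum>a\<in>C i. (Ar * Qm) $$ (a,y)) = RR i y"
        using RR_sym[OF i(1) xy(2)] yD Ci by (simp add: Pidx)
      moreover
      have b1: "(x \<in> D \<and> (\<exists>i<t. y \<in> C i)) = False" "(y \<in> D \<and> (\<exists>i<t. x \<in> C i)) = True"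
        using xD yD i by auto
      have g: "gpi n A t C D $$ (x,y) = new_entry A (C i) y x" unfolding gpi_idx[OF xy] i_def
        by (simp only: b1 if_False if_True)
      ultimately show ?thesis using lhs xD yD xy NE[OF i(1) yD i(2)] A_sym[OF xy] g
        by (simp add: QM[OF P xy] Pidx i_def[symmetric])
    next
      case yD: False
      note cy = cover_pt[OF xy(2) yD]
      define j where "j = cell y"
      have j: "j < t" "y \<in> C j" using cy j_def by auto
      have Cj: "\<And>b. b \<in> C j \<Longrightarrow> b < n" using Ci_sub[OF j(1)] by auto
      define r where "r = RR j x"
      define c where "c = RR i y"
      have F1: "RR j a = r" if "a \<in> C i" for a
        using eqdeg i j that Ci RR_dnet r_def by (metis xy(1))
      have F2: "RR i b = c" if "b \<in> C j" for b
        using eqdeg i j that Cj RR_dnet c_def by (metis xy(2))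
      have F3: "NN i * r = NN j * c"
      proof -
        have "NN i * r = (\<Sum>a\<in>C i. RR j a)" using F1 by (simp add: NN_def)
        also have "\<dots> = (\<Sum>a\<in>C i. \<Sum>b\<in>C j. rat_of_int (A $$ (a,b)))" by (simp add: RR_def)
        also have "\<dots> = (\<Sum>b\<in>C j. \<Sum>a\<in>C i. rat_of_int (A $$ (a,b)))" by (rule sum.swap)
        also have "\<dots> = (\<Sum>b\<in>C j. RR i b)"
          using RR_sym[OF i(1)] Cj by simp
        also have "\<dots> = NN j * c" using F2 by (simp add: NN_def)
        finally show ?thesis .
      qed
      have S: "(\<Sum>a\<in>C i. (Ar * Qm) $$ (a,y)) = 2 / NN j * (NN i * r) - c"
      proof -
        have "(\<Sum>a\<in>C i. (Ar * Qm) $$ (a,y)) = (\<Sum>a\<in>C i. 2 / NN j * r - rat_of_int (A $$ (a,y)))"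
          using Ci F1 yD by (intro sum.cong) (auto simp: Pidx j_def[symmetric])
        also have "\<dots> = 2 / NN j * (NN i * r) - c"
          using RR_sym[OF i(1) xy(2)] by (simp add: sum_subtractf NN_def c_def)
        finally show ?thesis .
      qed
      have "\<not> (\<exists>i<t. y \<in> C i) \<or> True" by simp
      have nD: "\<not> (x \<in> D \<and> (\<exists>i<t. y \<in> C i))" "\<not> (y \<in> D \<and> (\<exists>i<t. x \<in> C i))" using xD yD by auto
      have Ni: "NN i > 0" and Nj: "NN j > 0" using NN_pos i j by auto
      have alg: "2 / NN i * (2 / NN j * (NN i * r) - c) - (2 / NN j * r - a) = a" for a
      proof -
        have "2 / NN i * (2 / NN j * (NN i * r) - c) - (2 / NN j * r - a)
            = 2 * (NN i * r - NN j * c) / (NN i * NN j) + a"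
          using Ni Nj by (simp add: field_simps)
        then show ?thesis using F3 by simp
      qed
      have b1: "(x \<in> D \<and> (\<exists>i<t. y \<in> C i)) = False" "(y \<in> D \<and> (\<exists>i<t. x \<in> C i)) = False"
        using xD yD by auto
      have g: "gpi n A t C D $$ (x,y) = A $$ (x,y)" unfolding gpi_idx[OF xy] by (simp only: b1 if_False)
      show ?thesis using lhs xD yD xy S alg g
        by (simp add: QM[OF P xy] Pidx i_def[symmetric] j_def[symmetric] r_def)
    qed
  qed
qed (auto simp: Gr_def gpi_def Qm_def)

lemma main: "char_poly (gpi n A t C D) = char_poly A"
proof -
  have G_car: "gpi n A t C D \<in> carrier_mat n n" by (simp add: gpi_def)
  have "similar_mat_wit Gr Ar Qm Qm"
    unfolding similar_mat_wit_def Let_def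
    using Ar_car Q_car QQ main_eq G_car
    by (auto simp: Gr_def assoc_mult_mat[of Qm n n Ar n Qm n])
  then have "char_poly Gr = char_poly Ar" by (intro char_poly_similar) (auto simp: similar_mat_def)
  then have "map_poly rat_of_int (char_poly (gpi n A t C D)) = map_poly rat_of_int (char_poly A)"
    unfolding Gr_def Ar_def of_int_hom.char_poly_hom[OF G_car] of_int_hom.char_poly_hom[OF A_car] .
  then show ?thesis
    by (metis (no_types) coeff_map_poly of_int_0 of_int_eq_iff poly_eq_iff)
qed

end

theorem theorem3p2:
  fixes n t :: nat and A :: "int mat" and C :: "nat \<Rightarrow> nat set" and D :: "nat set"
  assumes "signed_adj n A"
    and "\<forall>i<t. C i \<noteq> {}"
    and "(\<Union>i<t. C i) \<union> D = {0..<n}"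
    and "\<forall>i<t. \<forall>j<t. i \<noteq> j \<longrightarrow> C i \<inter> C j = {}"
    and "\<forall>i<t. C i \<inter> D = {}"
    and "\<forall>i<t. \<forall>j<t. \<forall>u\<in>C i. \<forall>w\<in>C i. dnet A (C j) u = dnet A (C j) w"
    and "\<forall>i<t. \<forall>v\<in>D. length (filter id [caseA A (C i) v, caseB A (C i) v,
            caseC A (C i) v, caseD A (C i) v, caseE A (C i) v]) = 1"
  shows "char_poly (gpi n A t C D) = char_poly A"
proof -
  interpret thm_setup n t A C D by (rule thm_setup.intro) (fact assms)+
  show ?thesis by (rule main)
qed

end
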